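(* For $k \ge 3$ let $L_k=\lim_{r\to\infty} R_r(k)^{1/r}$, and assume the Diagonal Conjecture (DC) holds: for every $r \ge 2$, all integers $3 \le s \le t$ and all integers $k_3,\dots,k_r \ge 2$, we have $R(s,t,k_3,\dots,k_r) \ge R(s-1,t+1,k_3,\dots,k_r)$. Then (a) either all $L_k$ ($k\ge 3$) are finite or all of them are infinite; and (b) if $L_3$ is finite, then $L_k < L_{k+1}$ for all $k \ge 3$.
   Context: $R(k_1,\dots,k_r)$ denotes the multicolor Ramsey number: the least $n$ such that every coloring of the edges of $K_n$ with $r$ colors contains, for some $i$, a complete subgraph $K_{k_i}$ all of whose edges have color $i$; it is symmetric in its arguments. $R_r(k)=R(k,\dots,k)$ with $r$ arguments equal to $k$. It is known (independently of DC) that each limit $L_k$ exists (possibly infinite) and $L_k \le L_{k+1}$. *)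

theory Defs
  imports "HOL-Analysis.Analysis"
begin

text \<open>Vertices of K_n are 0..n-1; an edge is a 2-element subset. A colouring with
  r = length ks colours assigns a colour < r to each edge. ks ! i is the clique
  size demanded in colour i.\<close>

definition ramsey_arrows :: "nat list \<Rightarrow> nat \<Rightarrow> bool" where
  "ramsey_arrows ks n \<longleftrightarrow>
     (\<forall>c :: nat set \<Rightarrow> nat.
        (\<forall>e. e \<subseteq> {..<n} \<and> card e = 2 \<longrightarrow> c e < length ks) \<longrightarrow>
        (\<exists>i < length ks. \<exists>S \<subseteq> {..<n}. card S = ks ! i \<and>
            (\<forall>e. e \<subseteq> S \<and> card e = 2 \<longrightarrow> c e = i)))"

definition ramsey_num :: "nat list \<Rightarrow> nat" where
  "ramsey_num ks = (LEAST n. ramsey_arrows ks n)"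

definition diag_ramsey :: "nat \<Rightarrow> nat \<Rightarrow> nat" where
  "diag_ramsey r k = ramsey_num (replicate r k)"

definition L_lim :: "nat \<Rightarrow> ereal" where
  "L_lim k = lim (\<lambda>r. ereal (root r (real (diag_ramsey r k))))"

definition diagonal_conjecture :: bool where
  "diagonal_conjecture \<longleftrightarrow>
     (\<forall>s t ks. 3 \<le> s \<and> s \<le> t \<and> (\<forall>k \<in> set ks. 2 \<le> k) \<longrightarrow>
        ramsey_num ((s - 1) # (t + 1) # ks) \<le> ramsey_num (s # t # ks))"

end

theory Submission
  imports Defs "HOL-Library.Ramsey" "HOL-Combinatorics.Permutations"
begin

lemma arrows_mono:
  assumes "ramsey_arrows ks m" "m \<le> n"
  shows "ramsey_arrows ks n"
  unfolding ramsey_arrows_def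
proof (intro allI impI)
  fix c :: "nat set \<Rightarrow> nat"
  assume h: "\<forall>e. e \<subseteq> {..<n} \<and> card e = 2 \<longrightarrow> c e < length ks"
  have "\<forall>e. e \<subseteq> {..<m} \<and> card e = 2 \<longrightarrow> c e < length ks"
    using h assms(2) by (meson lessThan_subset_iff subset_trans)
  then obtain i S where "i < length ks" "S \<subseteq> {..<m}" "card S = ks ! i"
     "\<forall>e. e \<subseteq> S \<and> card e = 2 \<longrightarrow> c e = i"
    using mp[OF assms(1)[unfolded ramsey_arrows_def, THEN spec[of _ c]]] by blast
  then show "\<exists>i < length ks. \<exists>S \<subseteq> {..<n}. card S = ks ! i \<and>
            (\<forall>e. e \<subseteq> S \<and> card e = 2 \<longrightarrow> c e = i)"
    using assms(2) lessThan_subset_iff[of m n] by (meson subset_trans)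
qed

lemma arrows_exists: "\<exists>n. ramsey_arrows ks n"
proof -
  obtain N :: nat where N: "partn_lst {..<N} ks 2" using ramsey_full by blast
  have "ramsey_arrows ks N"
    unfolding ramsey_arrows_def
  proof (intro allI impI)
    fix c :: "nat set \<Rightarrow> nat"
    assume h: "\<forall>e. e \<subseteq> {..<N} \<and> card e = 2 \<longrightarrow> c e < length ks"
    have "c \<in> nsets {..<N} 2 \<rightarrow> {..<length ks}"
      using h by (auto simp: nsets_def)
    then obtain i H where "i < length ks" "H \<in> nsets {..<N} (ks!i)" "c ` (nsets H 2) \<subseteq> {i}"
      using partn_lstE[OF N] by blast
    moreover have "\<forall>e. e \<subseteq> H \<and> card e = 2 \<longrightarrow> c e = i"
    proof (intro allI impI)
      fix e assume e: "e \<subseteq> H \<and> card e = 2"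
      then have "finite e" using card.infinite by fastforce
      then have "e \<in> nsets H 2" using e by (simp add: nsets_def)
      then show "c e = i" using \<open>c ` (nsets H 2) \<subseteq> {i}\<close> by blast
    qed
    moreover have "H \<subseteq> {..<N}" "card H = ks ! i"
      using \<open>H \<in> nsets {..<N} (ks!i)\<close> by (auto simp: nsets_def)
    ultimately show "\<exists>i < length ks. \<exists>S \<subseteq> {..<N}. card S = ks ! i \<and>
            (\<forall>e. e \<subseteq> S \<and> card e = 2 \<longrightarrow> c e = i)"
      by blast
  qed
  then show ?thesis by blast
qed

lemma arrows_iff: "ramsey_arrows ks n \<longleftrightarrow> ramsey_num ks \<le> n"
proof
  assume "ramsey_arrows ks n" then show "ramsey_num ks \<le> n"
    unfolding ramsey_num_def by (rule Least_le)
next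
  assume "ramsey_num ks \<le> n"
  moreover have "ramsey_arrows ks (ramsey_num ks)"
    unfolding ramsey_num_def using arrows_exists by (rule LeastI_ex)
  ultimately show "ramsey_arrows ks n" using arrows_mono by blast
qed

lemma not_arrows_less: "\<not> ramsey_arrows ks n \<Longrightarrow> n < ramsey_num ks"
  using arrows_iff by (meson not_le)

lemma not_arrows_pred:
  assumes "\<not> ramsey_arrows ks m"
  shows "\<not> ramsey_arrows ks (ramsey_num ks - 1)"
proof -
  have "0 < ramsey_num ks" using not_arrows_less[OF assms] by simp
  then show ?thesis by (simp add: arrows_iff)
qed

lemma not_arrows_nil: "\<not> ramsey_arrows [] 1"
proof -
  have "\<forall>e. e \<subseteq> {..<1::nat} \<and> card e = 2 \<longrightarrow> (0::nat) < length ([]::nat list)"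
  proof (intro allI impI)
    fix e :: "nat set" assume "e \<subseteq> {..<1} \<and> card e = 2"
    then have "card e \<le> card {..<1::nat}" by (meson card_mono finite_lessThan)
    with \<open>e \<subseteq> {..<1} \<and> card e = 2\<close> show "0 < length ([]::nat list)" by simp
  qed
  then show ?thesis unfolding ramsey_arrows_def by (intro notI) (drule spec[of _ "\<lambda>_. 0"], simp)
qed

lemma not_arrows_single:
  assumes "1 \<le> k" shows "\<not> ramsey_arrows [k] (k - 1)"
proof -
  have "\<not> (\<exists>i < length [k]. \<exists>S \<subseteq> {..<k-1}. card S = [k] ! i \<and>
            (\<forall>e. e \<subseteq> S \<and> card e = 2 \<longrightarrow> (\<lambda>_. 0::nat) e = i))"
  proof
    assume "\<exists>i < length [k]. \<exists>S \<subseteq> {..<k-1}. card S = [k] ! i \<and>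
            (\<forall>e. e \<subseteq> S \<and> card e = 2 \<longrightarrow> (\<lambda>_. 0::nat) e = i)"
    then obtain S where "S \<subseteq> {..<k-1}" "card S = k" by auto
    then have "card S \<le> k - 1" by (metis card_lessThan card_mono finite_lessThan)
    with \<open>card S = k\<close> assms show False by simp
  qed
  moreover have "\<forall>e. e \<subseteq> {..<k-1} \<and> card e = 2 \<longrightarrow> (\<lambda>_. 0::nat) e < length [k]"
    by simp
  ultimately show ?thesis unfolding ramsey_arrows_def
    by (intro notI) (drule spec[of _ "\<lambda>_. 0::nat"], blast)
qed

lemma card2_obtain:
  assumes "card e = 2" obtains x y where "x \<noteq> y" "e = {x, y}"
  using assms by (meson card_2_iff)

lemma not_arrows_prod:
  assumes A: "\<not> ramsey_arrows A a" and B: "\<not> ramsey_arrows B b"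
  shows "\<not> ramsey_arrows (A @ B) (a * b)"
proof
  assume AB: "ramsey_arrows (A @ B) (a * b)"
  obtain cA where cA: "\<forall>e. e \<subseteq> {..<a} \<and> card e = 2 \<longrightarrow> cA e < length A"
    and cAn: "\<not> (\<exists>i < length A. \<exists>S \<subseteq> {..<a}. card S = A ! i \<and>
            (\<forall>e. e \<subseteq> S \<and> card e = 2 \<longrightarrow> cA e = i))"
    using A unfolding ramsey_arrows_def by blast
  obtain cB where cB: "\<forall>e. e \<subseteq> {..<b} \<and> card e = 2 \<longrightarrow> cB e < length B"
    and cBn: "\<not> (\<exists>i < length B. \<exists>S \<subseteq> {..<b}. card S = B ! i \<and>
            (\<forall>e. e \<subseteq> S \<and> card e = 2 \<longrightarrow> cB e = i))"
    using B unfolding ramsey_arrows_def by blast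
  define d where "d = (\<lambda>v::nat. v div b)"
  define m where "m = (\<lambda>v::nat. v mod b)"
  define c where "c = (\<lambda>e. if card (d ` e) = 2 then cA (d ` e) else length A + cB (m ` e))"
  have edge: "c {u, v} = cA {d u, d v} \<and> d u \<noteq> d v \<or>
              c {u, v} = length A + cB {m u, m v} \<and> d u = d v \<and> m u \<noteq> m v"
    if "u \<noteq> v" for u v
  proof (cases "d u = d v")
    case True
    then have "m u \<noteq> m v" using that unfolding d_def m_def
      by (metis div_mult_mod_eq[of u b] div_mult_mod_eq[of v b])
    moreover have "card (d ` {u, v}) \<noteq> 2" using True by simp
    ultimately show ?thesis using True unfolding c_def by auto
  next
    case False
    then show ?thesis unfolding c_def by auto
  qed
  have valid: "\<forall>e. e \<subseteq> {..<a*b} \<and> card e = 2 \<longrightarrow> c e < length (A @ B)"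
  proof (intro allI impI)
    fix e assume e: "e \<subseteq> {..<a*b} \<and> card e = 2"
    then obtain u v where uv: "u \<noteq> v" "e = {u, v}" by (meson card2_obtain)
    have ub: "u < a * b" "v < a * b" using e uv by auto
    then have bpos: "0 < b" by (cases "b = 0") auto
    have "d u < a" "d v < a" using ub unfolding d_def
      by (simp_all add: div_less_iff_less_mult mult.commute bpos)
    moreover have "m u < b" "m v < b" unfolding m_def using bpos by auto
    ultimately show "c e < length (A @ B)"
      using edge[OF uv(1)]
    proof (elim disjE conjE)
      assume "c {u,v} = cA {d u, d v}" "d u \<noteq> d v" "d u < a" "d v < a"
      moreover have "cA {d u, d v} < length A"
        using cA[rule_format, of "{d u, d v}"] \<open>d u < a\<close> \<open>d v < a\<close> \<open>d u \<noteq> d v\<close> by auto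
      ultimately show ?thesis using uv(2) by simp
    next
      assume "c {u,v} = length A + cB {m u, m v}" "m u \<noteq> m v" "m u < b" "m v < b"
      moreover have "cB {m u, m v} < length B"
        using cB[rule_format, of "{m u, m v}"] \<open>m u < b\<close> \<open>m v < b\<close> \<open>m u \<noteq> m v\<close> by auto
      ultimately show ?thesis using uv(2) by simp
    qed
  qed
  obtain i S where i: "i < length (A @ B)" and S: "S \<subseteq> {..<a*b}" "card S = (A @ B) ! i"
    and mono: "\<forall>e. e \<subseteq> S \<and> card e = 2 \<longrightarrow> c e = i"
    using mp[OF AB[unfolded ramsey_arrows_def, THEN spec[of _ c]] valid] by blast
  have monouv: "c {u, v} = i" if "u \<in> S" "v \<in> S" "u \<noteq> v" for u v
    using mono that by auto
  have bpos: "0 < b" if Sne: "S \<noteq> {}"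
  proof -
    obtain u where "u \<in> S" using Sne by blast
    then have "u < a * b" using S by auto
    then show ?thesis by (cases "b = 0") auto
  qed
  have dlt: "d u < a" if "u \<in> S" for u
  proof -
    have "u < a * b" using S that by auto
    moreover have "0 < b" using bpos that by blast
    ultimately show ?thesis unfolding d_def by (simp add: div_less_iff_less_mult)
  qed
  show False
  proof (cases "i < length A")
    case True
    have inj: "inj_on d S"
    proof (rule inj_onI)
      fix u v assume "u \<in> S" "v \<in> S" "d u = d v"
      show "u = v"
      proof (rule ccontr)
        assume "u \<noteq> v"
        then have "c {u, v} \<ge> length A" using edge[of u v] \<open>d u = d v\<close> by auto
        with monouv[OF \<open>u \<in> S\<close> \<open>v \<in> S\<close> \<open>u \<noteq> v\<close>] True show False by simp
      qed
    qed
    have "d ` S \<subseteq> {..<a}" using dlt by auto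
    moreover have "card (d ` S) = A ! i" using inj S True by (simp add: card_image nth_append)
    moreover have "\<forall>e. e \<subseteq> d ` S \<and> card e = 2 \<longrightarrow> cA e = i"
    proof (intro allI impI)
      fix e assume e: "e \<subseteq> d ` S \<and> card e = 2"
      then obtain x y where xy: "x \<noteq> y" "e = {x, y}" by (meson card2_obtain)
      then obtain u v where "u \<in> S" "v \<in> S" "x = d u" "y = d v" using e by auto
      then have "u \<noteq> v" using xy by auto
      then show "cA e = i" using edge[of u v] monouv[OF \<open>u \<in> S\<close> \<open>v \<in> S\<close>] xy
        \<open>x = d u\<close> \<open>y = d v\<close> by auto
    qed
    ultimately show False using cAn True by blast
  next
    case False
    define j where "j = i - length A"
    have j: "j < length B" "i = length A + j" using i False unfolding j_def by auto
    have samed: "d u = d v" if "u \<in> S" "v \<in> S" for u v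
    proof (rule ccontr)
      assume "d u \<noteq> d v"
      then have "u \<noteq> v" by auto
      have "c {u, v} = cA {d u, d v}" using edge[OF \<open>u \<noteq> v\<close>] \<open>d u \<noteq> d v\<close> by auto
      moreover have "cA {d u, d v} < length A"
        using cA[rule_format, of "{d u, d v}"] dlt[OF that(1)] dlt[OF that(2)] \<open>d u \<noteq> d v\<close> by auto
      ultimately have "c {u, v} < length A" by simp
      with monouv[OF that \<open>u \<noteq> v\<close>] False show False by simp
    qed
    have inj: "inj_on m S"
    proof (rule inj_onI)
      fix u v assume "u \<in> S" "v \<in> S" "m u = m v"
      then show "u = v" using samed[of u v] unfolding d_def m_def
        by (metis div_mult_mod_eq[of u b] div_mult_mod_eq[of v b])
    qed
    have "m ` S \<subseteq> {..<b}"
    proof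
      fix x assume "x \<in> m ` S"
      then obtain u where "u \<in> S" "x = m u" by auto
      then have "0 < b" using bpos by blast
      then show "x \<in> {..<b}" using \<open>x = m u\<close> unfolding m_def by simp
    qed
    moreover have "card (m ` S) = B ! j" using inj S j by (simp add: card_image nth_append)
    moreover have "\<forall>e. e \<subseteq> m ` S \<and> card e = 2 \<longrightarrow> cB e = j"
    proof (intro allI impI)
      fix e assume e: "e \<subseteq> m ` S \<and> card e = 2"
      then obtain x y where xy: "x \<noteq> y" "e = {x, y}" by (meson card2_obtain)
      then obtain u v where "u \<in> S" "v \<in> S" "x = m u" "y = m v" using e by auto
      then have "u \<noteq> v" using xy by auto
      then show "cB e = j" using edge[of u v] monouv[OF \<open>u \<in> S\<close> \<open>v \<in> S\<close>] xy j
        \<open>x = m u\<close> \<open>y = m v\<close> samed[OF \<open>u \<in> S\<close> \<open>v \<in> S\<close>] by auto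
    qed
    ultimately show False using cBn j by blast
  qed
qed

lemma arrows_perm:
  assumes mA: "mset A = mset B" and arr: "ramsey_arrows A n"
  shows "ramsey_arrows B n"
proof -
  obtain p where p: "p permutes {..<length B}" "permute_list p B = A"
    using mset_eq_permutation[OF mA] by blast
  have len: "length A = length B" using mA by (metis size_mset)
  show ?thesis
    unfolding ramsey_arrows_def
  proof (intro allI impI)
    fix c :: "nat set \<Rightarrow> nat"
    assume hc: "\<forall>e. e \<subseteq> {..<n} \<and> card e = 2 \<longrightarrow> c e < length B"
    define c' where "c' = (\<lambda>e. inv p (c e))"
    have pinv: "inv p permutes {..<length B}" using p(1) by (rule permutes_inv)
    have "\<forall>e. e \<subseteq> {..<n} \<and> card e = 2 \<longrightarrow> c' e < length A"
    proof (intro allI impI)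
      fix e assume "e \<subseteq> {..<n} \<and> card e = 2"
      then have "c e \<in> {..<length B}" using hc by blast
      then have "inv p (c e) \<in> {..<length B}" using permutes_in_image[OF pinv] by blast
      then show "c' e < length A" unfolding c'_def using len by simp
    qed
    then obtain i S where i: "i < length A" and S: "S \<subseteq> {..<n}" "card S = A ! i"
      and mono: "\<forall>e. e \<subseteq> S \<and> card e = 2 \<longrightarrow> c' e = i"
      using mp[OF arr[unfolded ramsey_arrows_def, THEN spec[of _ c']]] by blast
    have pi: "p i < length B" using permutes_in_image[OF p(1), of i] i len by simp
    have "B ! (p i) = A ! i" using p(2) i len permute_list_nth[OF p(1), of i] by simp
    moreover have "\<forall>e. e \<subseteq> S \<and> card e = 2 \<longrightarrow> c e = p i"
    proof (intro allI impI)
      fix e assume "e \<subseteq> S \<and> card e = 2"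
      then have "inv p (c e) = i" using mono unfolding c'_def by blast
      then show "c e = p i" using permutes_inv_eq[OF p(1), of "c e" i] by simp
    qed
    ultimately show "\<exists>i < length B. \<exists>S \<subseteq> {..<n}. card S = B ! i \<and>
            (\<forall>e. e \<subseteq> S \<and> card e = 2 \<longrightarrow> c e = i)"
      using pi S by metis
  qed
qed

lemma ramsey_num_perm:
  assumes "mset A = mset B" shows "ramsey_num A = ramsey_num B"
proof -
  have "ramsey_arrows A = ramsey_arrows B"
    using arrows_perm[OF assms] arrows_perm[OF assms[symmetric]] by (intro ext) blast
  then show ?thesis unfolding ramsey_num_def by simp
qed

lemma arrows_smaller:
  assumes len: "length A = length B" and le: "\<forall>i<length A. A ! i \<le> B ! i"
    and arr: "ramsey_arrows B n"
  shows "ramsey_arrows A n"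
  unfolding ramsey_arrows_def
proof (intro allI impI)
  fix c :: "nat set \<Rightarrow> nat"
  assume hc: "\<forall>e. e \<subseteq> {..<n} \<and> card e = 2 \<longrightarrow> c e < length A"
  then have "\<forall>e. e \<subseteq> {..<n} \<and> card e = 2 \<longrightarrow> c e < length B" using len by simp
  then obtain i S where i: "i < length B" and S: "S \<subseteq> {..<n}" "card S = B ! i"
      and mono: "\<forall>e. e \<subseteq> S \<and> card e = 2 \<longrightarrow> c e = i"
      using mp[OF arr[unfolded ramsey_arrows_def, THEN spec[of _ c]]] by blast
  have "A ! i \<le> card S" using le i len S by simp
  then obtain T where T: "T \<subseteq> S" "card T = A ! i" by (meson obtain_subset_with_card_n)
  have "\<forall>e. e \<subseteq> T \<and> card e = 2 \<longrightarrow> c e = i" using mono T by blast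
  moreover have "T \<subseteq> {..<n}" using T S by blast
  moreover have "i < length A" using i len by simp
  ultimately show "\<exists>i < length A. \<exists>S \<subseteq> {..<n}. card S = A ! i \<and>
            (\<forall>e. e \<subseteq> S \<and> card e = 2 \<longrightarrow> c e = i)"
    using T by metis
qed

lemma ramsey_num_mono:
  assumes "length A = length B" "\<forall>i<length A. A ! i \<le> B ! i"
  shows "ramsey_num A \<le> ramsey_num B"
proof -
  have "ramsey_arrows B (ramsey_num B)" using arrows_iff by blast
  then have "ramsey_arrows A (ramsey_num B)" using arrows_smaller assms by blast
  then show ?thesis using arrows_iff by blast
qed

lemma not_arrows_rep:
  assumes "1 \<le> k" shows "\<not> ramsey_arrows (replicate r k) ((k - 1) ^ r)"
proof (induction r)
  case 0
  then show ?case using not_arrows_nil by simp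
next
  case (Suc r)
  have "\<not> ramsey_arrows ([k] @ replicate r k) ((k - 1) * (k - 1) ^ r)"
    by (rule not_arrows_prod[OF not_arrows_single[OF assms] Suc])
  then show ?case by simp
qed

definition aa :: "nat \<Rightarrow> nat \<Rightarrow> nat" where
  "aa k r = ramsey_num (replicate r k) - 1"

lemma aa_lower:
  assumes "1 \<le> k" shows "(k - 1) ^ r \<le> aa k r"
  using not_arrows_less[OF not_arrows_rep[OF assms, of r]] unfolding aa_def by arith

lemma diag_aa:
  assumes "1 \<le> k" shows "diag_ramsey r k = aa k r + 1"
  using not_arrows_less[OF not_arrows_rep[OF assms, of r]] unfolding aa_def diag_ramsey_def by arith

lemma not_arrows_aa:
  assumes "1 \<le> k" shows "\<not> ramsey_arrows (replicate r k) (aa k r)"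
  unfolding aa_def by (rule not_arrows_pred[OF not_arrows_rep[OF assms]])

lemma aa_supermult:
  assumes "1 \<le> k" shows "aa k r * aa k s \<le> aa k (r + s)"
proof -
  have "\<not> ramsey_arrows (replicate r k @ replicate s k) (aa k r * aa k s)"
    by (rule not_arrows_prod[OF not_arrows_aa[OF assms] not_arrows_aa[OF assms]])
  then have "aa k r * aa k s < ramsey_num (replicate (r + s) k)"
    using not_arrows_less by (simp add: replicate_add)
  then show ?thesis unfolding aa_def by simp
qed

lemma aa_mono:
  assumes "k \<le> k'" shows "aa k r \<le> aa k' r"
proof -
  have "ramsey_num (replicate r k) \<le> ramsey_num (replicate r k')"
    by (rule ramsey_num_mono) (use assms in auto)
  then show ?thesis unfolding aa_def by simp
qed

lemma dc_chain:
  assumes dc: "diagonal_conjecture" and k: "3 \<le> k" and j: "j \<le> m"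
  shows "ramsey_num (replicate j (k-1) @ replicate j (k+1) @ replicate (2*(m-j)) k)
         \<le> ramsey_num (replicate (2*m) k)"
  using j
proof (induction j)
  case 0
  then show ?case by simp
next
  case (Suc j)
  define rest where "rest = replicate j (k-1) @ replicate j (k+1) @ replicate (2*(m - Suc j)) k"
  have e1: "mset (replicate (Suc j) (k-1) @ replicate (Suc j) (k+1) @ replicate (2*(m-Suc j)) k)
        = mset ((k-1) # (k+1) # rest)"
    unfolding rest_def by simp
  have eq2: "2*(m-j) = Suc (Suc (2*(m - Suc j)))" using Suc.prems by simp
  have e2: "mset (replicate j (k-1) @ replicate j (k+1) @ replicate (2*(m-j)) k)
        = mset (k # k # rest)"
    unfolding rest_def eq2 by simp
  have rest2: "\<forall>x \<in> set rest. 2 \<le> x" unfolding rest_def using k by auto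
  have "ramsey_num ((k - 1) # (k + 1) # rest) \<le> ramsey_num (k # k # rest)"
    using dc[unfolded diagonal_conjecture_def, rule_format, of k k rest] k rest2 by simp
  moreover have "ramsey_num (k # k # rest) \<le> ramsey_num (replicate (2*m) k)"
    using Suc.IH Suc.prems ramsey_num_perm[OF e2] by simp
  ultimately show ?case using ramsey_num_perm[OF e1] by simp
qed

lemma aa_dc:
  assumes dc: "diagonal_conjecture" and k: "3 \<le> k"
  shows "aa (k-1) m * aa (k+1) m \<le> aa k (2*m)"
proof -
  have k1: "1 \<le> k - 1" "1 \<le> k + 1" using k by auto
  have "\<not> ramsey_arrows (replicate m (k-1) @ replicate m (k+1)) (aa (k-1) m * aa (k+1) m)"
    by (rule not_arrows_prod[OF not_arrows_aa[OF k1(1)] not_arrows_aa[OF k1(2)]])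
  then have "aa (k-1) m * aa (k+1) m < ramsey_num (replicate m (k-1) @ replicate m (k+1))"
    by (rule not_arrows_less)
  also have "\<dots> \<le> ramsey_num (replicate (2*m) k)"
    using dc_chain[OF dc k, of m m] by simp
  finally show ?thesis unfolding aa_def by arith
qed

lemma aa_ge1: assumes "2 \<le> k" shows "1 \<le> aa k r"
proof -
  have "1 \<le> (k - 1) ^ r" using assms by simp
  then show ?thesis using aa_lower[of k r] assms by linarith
qed

lemma aa_pow: assumes "2 \<le> k" shows "aa k m ^ q \<le> aa k (q * m)"
proof (induction q)
  case 0
  then show ?case using aa_ge1[OF assms, of 0] by simp
next
  case (Suc q)
  have "aa k m ^ Suc q = aa k m * aa k m ^ q" by simp
  also have "\<dots> \<le> aa k m * aa k (q * m)" using Suc by simp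
  also have "\<dots> \<le> aa k (m + q * m)" using aa_supermult[of k m "q*m"] assms by simp
  finally show ?case by (simp add: add.commute)
qed

lemma aa_divmod: assumes "2 \<le> k" shows "aa k m ^ (r div m) \<le> aa k r"
proof -
  have "aa k m ^ (r div m) \<le> aa k (r div m * m)" by (rule aa_pow[OF assms])
  also have "\<dots> \<le> aa k (r div m * m) * aa k (r mod m)" using aa_ge1[OF assms, of "r mod m"] by simp
  also have "\<dots> \<le> aa k (r div m * m + r mod m)" using aa_supermult[of k "r div m * m" "r mod m"] assms by simp
  also have "r div m * m + r mod m = r" by (rule div_mult_mod_eq)
  finally show ?thesis .
qed

definition rho :: "nat \<Rightarrow> nat \<Rightarrow> real" where
  "rho k m = root m (real (aa k m))"

definition ell :: "nat \<Rightarrow> ereal" where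
  "ell k = (SUP m\<in>{1..}. ereal (rho k m))"

lemma rho_ge1: assumes "2 \<le> k" "1 \<le> m" shows "1 \<le> rho k m"
proof -
  have "root m 1 \<le> root m (real (aa k m))"
    using aa_ge1[OF assms(1), of m] assms(2) by (intro real_root_le_mono) auto
  then show ?thesis unfolding rho_def using assms(2) by simp
qed

lemma rho_le_ell: "1 \<le> m \<Longrightarrow> ereal (rho k m) \<le> ell k"
  unfolding ell_def by (rule SUP_upper) auto

lemma ell_least: "(\<And>m. 1 \<le> m \<Longrightarrow> ereal (rho k m) \<le> y) \<Longrightarrow> ell k \<le> y"
  unfolding ell_def by (rule SUP_least) auto

lemma rho_1: "rho k 1 = real (aa k 1)"
  unfolding rho_def by simp

lemma ell_ge: assumes "1 \<le> k" shows "ereal (real k - 1) \<le> ell k"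
proof -
  have "k - 1 \<le> aa k 1" using aa_lower[OF assms, of 1] by simp
  then have "real k - 1 \<le> rho k 1" using assms unfolding rho_1 by linarith
  then have "ereal (real k - 1) \<le> ereal (rho k 1)" by simp
  then show ?thesis using rho_le_ell[of 1 k] by (rule order_trans) simp
qed

lemma ell_ge1: assumes "2 \<le> k" shows "1 \<le> ell k"
proof -
  have "ereal 1 \<le> ereal (rho k 1)" using rho_ge1[OF assms, of 1] by simp
  then have "ereal 1 \<le> ell k" using rho_le_ell[of 1 k] by (rule order_trans) simp
  then show ?thesis by (simp add: one_ereal_def)
qed

lemma rho_mono: assumes "k \<le> k'" "1 \<le> m" shows "rho k m \<le> rho k' m"
  unfolding rho_def using aa_mono[OF assms(1), of m] assms(2) by (intro real_root_le_mono) auto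

lemma ell_mono: assumes "k \<le> k'" shows "ell k \<le> ell k'"
proof (rule ell_least)
  fix m :: nat assume "1 \<le> m"
  then show "ereal (rho k m) \<le> ell k'"
  proof -
    have "ereal (rho k m) \<le> ereal (rho k' m)" using rho_mono[OF assms \<open>1 \<le> m\<close>] by simp
    then show ?thesis using rho_le_ell[OF \<open>1 \<le> m\<close>, of k'] by (rule order_trans)
  qed
qed

lemma rho_dvd: assumes "2 \<le> k" "1 \<le> m" "1 \<le> q" shows "rho k m \<le> rho k (m * q)"
proof -
  have "root (m * q) (real (aa k m) ^ q) \<le> root (m * q) (real (aa k (q * m)))"
    using aa_pow[OF assms(1), of m q] assms by (intro real_root_le_mono) (auto simp flip: of_nat_power)
  moreover have "root (m * q) (real (aa k m) ^ q) = root m (real (aa k m))"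
    using assms by (simp add: real_root_mult_exp real_root_power_cancel)
  ultimately show ?thesis unfolding rho_def by (simp add: mult.commute)
qed

lemma rho_core:
  assumes dc: "diagonal_conjecture" and k: "3 \<le> k" and m: "1 \<le> m1" "1 \<le> m2"
  shows "rho (k-1) m1 * rho (k+1) m2 \<le> (rho k (2 * (m1 * m2)))\<^sup>2"
proof -
  define n where "n = m1 * m2"
  have n: "1 \<le> n" using m unfolding n_def by simp
  have k2: "2 \<le> k - 1" "2 \<le> k + 1" "2 \<le> k" using k by auto
  have r1: "rho (k-1) m1 \<le> rho (k-1) n" unfolding n_def using rho_dvd[OF k2(1) m] .
  have r2: "rho (k+1) m2 \<le> rho (k+1) n" unfolding n_def using rho_dvd[OF k2(2) m(2) m(1)]
    by (simp add: mult.commute)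
  have "rho (k-1) n * rho (k+1) n = root n (real (aa (k-1) n) * real (aa (k+1) n))"
    unfolding rho_def by (simp add: real_root_mult)
  also have "\<dots> \<le> root n (real (aa k (2 * n)))"
    using aa_dc[OF dc k, of n] n by (intro real_root_le_mono) (auto simp flip: of_nat_mult)
  also have "\<dots> = (rho k (2 * n))\<^sup>2"
  proof -
    have "rho k (2 * n) = sqrt (root n (real (aa k (2 * n))))"
      unfolding rho_def by (simp add: real_root_mult_exp sqrt_def)
    then show ?thesis using real_root_ge_zero[of "real (aa k (2 * n))" n] by simp
  qed
  finally have "rho (k-1) n * rho (k+1) n \<le> (rho k (2 * n))\<^sup>2" .
  moreover have "rho (k-1) m1 * rho (k+1) m2 \<le> rho (k-1) n * rho (k+1) n"
    using r1 r2 rho_ge1[OF k2(1) m(1)] rho_ge1[OF k2(2) m(2)] by (intro mult_mono) auto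
  ultimately show ?thesis unfolding n_def by linarith
qed

lemma conv:
  assumes k: "2 \<le> k"
  shows "(\<lambda>r. ereal (root r (real (diag_ramsey r k)))) \<longlonglongrightarrow> ell k"
proof (rule order_tendstoI)
  fix y assume "y < ell k"
  then obtain m where m: "1 \<le> m" "y < ereal (rho k m)" unfolding ell_def
    using less_SUP_iff by (metis atLeast_iff)
  have d: "diag_ramsey r k = aa k r + 1" for r using diag_aa[of k r] k by simp
  show "\<forall>\<^sub>F r in sequentially. y < ereal (root r (real (diag_ramsey r k)))"
  proof (cases y)
    case MInf
    then show ?thesis by simp
  next
    case PInf
    then show ?thesis using m by simp
  next
    case (real Y)
    define b where "b = real (aa k m)"
    define c where "c = rho k m"
    have cb: "c = root m b" unfolding c_def b_def rho_def by simp
    have b1: "1 \<le> b" unfolding b_def using aa_ge1[OF k, of m] by simp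
    have cY: "Y < c" using m real unfolding c_def by simp
    show ?thesis
    proof (cases "Y < 1")
      case True
      have "\<forall>\<^sub>F r in sequentially. 1 \<le> r" by (rule eventually_ge_at_top)
      then show ?thesis
      proof (rule eventually_mono)
        fix r :: nat assume "1 \<le> r"
        have "root r 1 \<le> root r (real (diag_ramsey r k))"
          using \<open>1 \<le> r\<close> d[of r] by (intro real_root_le_mono) auto
        then have "1 \<le> root r (real (diag_ramsey r k))" using \<open>1 \<le> r\<close> by simp
        then show "y < ereal (root r (real (diag_ramsey r k)))" using True real by simp
      qed
    next
      case False
      then have Y1: "1 \<le> Y" by simp
      have "b \<noteq> 1" using cb cY Y1 m(1) by auto
      then have b1': "1 < b" using b1 by simp
      have lim: "(\<lambda>r. root r b) \<longlonglongrightarrow> 1" using b1 by (intro LIMSEQ_root_const) simp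
      have "1 < c / Y" using cY Y1 by simp
      then have ev1: "\<forall>\<^sub>F r in sequentially. root r b < c / Y" using order_tendstoD(2)[OF lim] by blast
      have ev2: "\<forall>\<^sub>F r in sequentially. m \<le> r" by (rule eventually_ge_at_top)
      show ?thesis using ev1 ev2
      proof (rule eventually_elim2)
        fix r :: nat assume r1: "root r b < c / Y" and r2: "m \<le> r"
        have rpos: "0 < r" using r2 m(1) by simp
        define q where "q = r div m"
        have "b ^ q \<le> real (aa k r)"
          unfolding b_def q_def using aa_divmod[OF k, of m r] by (simp flip: of_nat_power)
        then have "root r (b ^ q) \<le> root r (real (aa k r))"
          using rpos by (intro real_root_le_mono) auto
        also have "\<dots> \<le> root r (real (diag_ramsey r k))"
          using rpos d[of r] by (intro real_root_le_mono) auto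
        finally have A: "root r (b ^ q) \<le> root r (real (diag_ramsey r k))" .
        have "root r (b ^ q) = b powr (real q / real r)"
          using rpos b1 by (simp add: root_powr_inverse powr_realpow[symmetric] powr_powr)
        moreover have qr: "1 / real m - 1 / real r \<le> real q / real r"
        proof -
          have "r < q * m + m" unfolding q_def using m(1)
            by (metis add_less_cancel_left div_mult_mod_eq mod_less_divisor less_le_trans le_refl
                zero_less_iff_neq_zero not_one_le_zero)
          then have "real r < real q * real m + real m" by (simp flip: of_nat_mult of_nat_add)
          have mr: "0 < real m" "0 < real r" using rpos m(1) by auto
          have "1 / real m - 1 / real r = (real r - real m) / (real m * real r)"
            using mr by (simp add: field_simps)
          also have "\<dots> \<le> (real q * real m) / (real m * real r)"
            using \<open>real r < real q * real m + real m\<close> mr by (intro divide_right_mono) auto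
          also have "\<dots> = real q / real r" using mr by simp
          finally show ?thesis .
        qed
        then have "b powr (1 / real m - 1 / real r) \<le> b powr (real q / real r)"
          using b1 by (intro powr_mono) auto
        moreover have "b powr (1 / real m - 1 / real r) = c / root r b"
          using rpos m(1) b1 unfolding cb by (simp add: powr_diff root_powr_inverse)
        moreover have "Y < c / root r b"
        proof -
          have rb: "0 < root r b" using rpos b1 by simp
          have "root r b * Y < c" using r1 Y1 pos_less_divide_eq[of Y "root r b" c] by simp
          then have "Y * root r b < c" by (simp add: mult.commute)
          then show ?thesis using rb by (simp add: field_simps)
        qed
        ultimately have "Y < root r (real (diag_ramsey r k))" using A by linarith
        then show "y < ereal (root r (real (diag_ramsey r k)))" using real by simp
      qed
    qed
  qed
next
  fix y assume ly: "ell k < y"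
  have l1: "1 \<le> ell k" by (rule ell_ge1[OF k])
  obtain L where L: "ell k = ereal L" using ly l1
    by (cases "ell k") auto
  have L1: "1 \<le> L" using l1 L by (simp add: one_ereal_def)
  have d: "diag_ramsey r k = aa k r + 1" for r using diag_aa[of k r] k by simp
  show "\<forall>\<^sub>F r in sequentially. ereal (root r (real (diag_ramsey r k))) < y"
  proof (cases y)
    case PInf
    then show ?thesis by simp
  next
    case MInf
    then show ?thesis using ly by simp
  next
    case (real Y)
    have LY: "L < Y" using ly L real by simp
    have lim: "(\<lambda>r. root r 2) \<longlonglongrightarrow> 1" by (intro LIMSEQ_root_const) simp
    have "1 < Y / L" using LY L1 by simp
    then have ev1: "\<forall>\<^sub>F r in sequentially. root r 2 < Y / L" using order_tendstoD(2)[OF lim] by blast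
    have ev2: "\<forall>\<^sub>F r in sequentially. 1 \<le> r" by (rule eventually_ge_at_top)
    show ?thesis using ev1 ev2
    proof (rule eventually_elim2)
      fix r :: nat assume r1: "root r 2 < Y / L" and r2: "1 \<le> r"
      have a1: "1 \<le> real (aa k r)" using aa_ge1[OF k, of r] by simp
      have "root r (real (diag_ramsey r k)) \<le> root r (2 * real (aa k r))"
        using r2 d[of r] a1 by (intro real_root_le_mono) auto
      also have "\<dots> = root r 2 * rho k r" unfolding rho_def by (simp add: real_root_mult)
      also have "\<dots> \<le> root r 2 * L"
      proof -
        have "ereal (rho k r) \<le> ereal L" using rho_le_ell[OF r2, of k] L by simp
        then show ?thesis using r2 by (intro mult_left_mono) auto
      qed
      also have "\<dots> < (Y / L) * L" using r1 L1 by (intro mult_strict_right_mono) auto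
      also have "\<dots> = Y" using L1 by simp
      finally show "ereal (root r (real (diag_ramsey r k))) < y" using real by simp
    qed
  qed
qed

lemma L_lim_ell: assumes "2 \<le> k" shows "L_lim k = ell k"
  unfolding L_lim_def using conv[OF assms] by (rule limI)

lemma rho_le_real: assumes "ell k = ereal L" "1 \<le> m" shows "rho k m \<le> L"
  using rho_le_ell[OF assms(2), of k] assms(1) by simp

lemma ell_finite_step:
  assumes dc: "diagonal_conjecture" and k: "3 \<le> k" and L: "ell k = ereal L"
  shows "ell (Suc k) \<le> ereal (L\<^sup>2)"
proof (rule ell_least)
  fix m :: nat assume m: "1 \<le> m"
  have k2: "2 \<le> k - 1" "2 \<le> Suc k" "2 \<le> k" using k by auto
  have r1: "1 \<le> rho (k-1) 1" by (rule rho_ge1[OF k2(1)]) simp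
  have r2: "1 \<le> rho (Suc k) m" by (rule rho_ge1[OF k2(2) m])
  have "rho (Suc k) m \<le> rho (k-1) 1 * rho (Suc k) m" using r1 r2 by simp
  also have "\<dots> \<le> (rho k (2 * (1 * m)))\<^sup>2" using rho_core[OF dc k _ m, of 1] by simp
  also have "\<dots> \<le> L\<^sup>2"
  proof -
    have "1 \<le> rho k (2 * (1 * m))" using rho_ge1[OF k2(3)] m by simp
    moreover have "rho k (2 * (1 * m)) \<le> L" using rho_le_real[OF L] m by simp
    ultimately show ?thesis by (intro power_mono) auto
  qed
  finally show "ereal (rho (Suc k) m) \<le> ereal (L\<^sup>2)" by simp
qed

lemma ell_logconcave:
  assumes dc: "diagonal_conjecture" and k: "3 \<le> k"
    and A: "ell (k-1) = ereal A" and L: "ell k = ereal L" and C: "ell (Suc k) = ereal C"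
  shows "A * C \<le> L\<^sup>2"
proof -
  have k2: "2 \<le> k - 1" "2 \<le> Suc k" "2 \<le> k" using k by auto
  have core: "rho (k-1) m1 * rho (Suc k) m2 \<le> L\<^sup>2" if m: "1 \<le> m1" "1 \<le> m2" for m1 m2
  proof -
    have "rho (k-1) m1 * rho (Suc k) m2 \<le> (rho k (2 * (m1 * m2)))\<^sup>2"
      using rho_core[OF dc k m] by simp
    also have "\<dots> \<le> L\<^sup>2"
    proof -
      have "1 \<le> rho k (2 * (m1 * m2))" using rho_ge1[OF k2(3)] m by simp
      moreover have "rho k (2 * (m1 * m2)) \<le> L" using rho_le_real[OF L] m by simp
      ultimately show ?thesis by (intro power_mono) auto
    qed
    finally show ?thesis .
  qed
  have A1: "1 \<le> A" using ell_ge1[OF k2(1)] A by (simp add: one_ereal_def)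
  have "ell (Suc k) \<le> ereal (L\<^sup>2 / A)"
  proof (rule ell_least)
    fix m2 :: nat assume m2: "1 \<le> m2"
    have r2: "1 \<le> rho (Suc k) m2" by (rule rho_ge1[OF k2(2) m2])
    have "ell (k-1) \<le> ereal (L\<^sup>2 / rho (Suc k) m2)"
    proof (rule ell_least)
      fix m1 :: nat assume m1: "1 \<le> m1"
      have "rho (k-1) m1 \<le> L\<^sup>2 / rho (Suc k) m2"
        using core[OF m1 m2] r2 by (simp add: pos_le_divide_eq)
      then show "ereal (rho (k-1) m1) \<le> ereal (L\<^sup>2 / rho (Suc k) m2)" by simp
    qed
    then have "A \<le> L\<^sup>2 / rho (Suc k) m2" using A by simp
    then have "A * rho (Suc k) m2 \<le> L\<^sup>2" using r2 by (simp add: pos_le_divide_eq)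
    then have "rho (Suc k) m2 \<le> L\<^sup>2 / A" using A1 by (simp add: pos_le_divide_eq mult.commute)
    then show "ereal (rho (Suc k) m2) \<le> ereal (L\<^sup>2 / A)" by simp
  qed
  then have "C \<le> L\<^sup>2 / A" using C by simp
  then show ?thesis using A1 by (simp add: pos_le_divide_eq mult.commute)
qed

lemma all_finite:
  assumes dc: "diagonal_conjecture" and f3: "ell 3 < \<infinity>" and k: "3 \<le> k"
  shows "ell k < \<infinity>"
  using k
proof (induction k rule: dec_induct)
  case base
  then show ?case using f3 .
next
  case (step n)
  have n2: "2 \<le> n" using step.hyps by simp
  obtain L where L: "ell n = ereal L"
    using step.IH ell_ge1[OF n2] by (cases "ell n") auto
  have "ell (Suc n) \<le> ereal (L\<^sup>2)" by (rule ell_finite_step[OF dc step.hyps(1) L])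
  then show ?case by (cases "ell (Suc n)") auto
qed

theorem main_result:
  assumes dc: "diagonal_conjecture"
  shows "((\<forall>k\<ge>3. L_lim k < \<infinity>) \<or> (\<forall>k\<ge>3. L_lim k = \<infinity>))
     \<and> (L_lim 3 < \<infinity> \<longrightarrow> (\<forall>k\<ge>3. L_lim k < L_lim (Suc k)))"
proof
  have LL: "L_lim k = ell k" if "2 \<le> k" for k using L_lim_ell that by blast
  show "(\<forall>k\<ge>3. L_lim k < \<infinity>) \<or> (\<forall>k\<ge>3. L_lim k = \<infinity>)"
  proof (cases "ell 3 < \<infinity>")
    case True
    then have "\<forall>k\<ge>3. L_lim k < \<infinity>" using all_finite[OF dc True] LL by simp
    then show ?thesis by blast
  next
    case False
    then have e3: "ell 3 = \<infinity>" by simp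
    have "\<forall>k\<ge>3. L_lim k = \<infinity>"
    proof (intro allI impI)
      fix k :: nat assume "3 \<le> k"
      then have "ell 3 \<le> ell k" by (rule ell_mono)
      then show "L_lim k = \<infinity>" using e3 LL \<open>3 \<le> k\<close> by simp
    qed
    then show ?thesis by blast
  qed
  show "L_lim 3 < \<infinity> \<longrightarrow> (\<forall>k\<ge>3. L_lim k < L_lim (Suc k))"
  proof (intro impI allI)
    fix k :: nat
    assume f3': "L_lim 3 < \<infinity>" and k: "3 \<le> k"
    have f3: "ell 3 < \<infinity>" using f3' LL by simp
    define Lr where "Lr = (\<lambda>j. real_of_ereal (ell j))"
    have fin: "ell j = ereal (Lr j)" if "2 \<le> j" for j
    proof -
      have "ell j \<le> ell 3 \<or> 3 \<le> j" using ell_mono[of j 3] that by (cases "j = 2") auto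
      then have "ell j < \<infinity>" using f3 all_finite[OF dc f3] by (meson order_le_less_trans)
      moreover have "1 \<le> ell j" by (rule ell_ge1[OF that])
      ultimately show ?thesis unfolding Lr_def by (cases "ell j") auto
    qed
    have Lr1: "1 \<le> Lr j" if "2 \<le> j" for j using ell_ge1[OF that] fin[OF that] by (simp add: one_ereal_def)
    have Lrmono: "Lr j \<le> Lr j'" if "2 \<le> j" "j \<le> j'" for j j'
      using ell_mono[OF that(2)] fin[OF that(1)] fin[of j'] that by simp
    have Lrge: "real j - 1 \<le> Lr j" if "2 \<le> j" for j
      using ell_ge[of j] fin[OF that] that by simp
    show "L_lim k < L_lim (Suc k)"
    proof (rule ccontr)
      assume "\<not> L_lim k < L_lim (Suc k)"
      then have "\<not> Lr k < Lr (Suc k)" using LL fin k by simp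
      then have eq0: "Lr (Suc k) = Lr k" using Lrmono[of k "Suc k"] k by simp
      have P: "Lr (k + n) = Lr k \<and> Lr (Suc (k + n)) = Lr k" for n
      proof (induction n)
        case 0
        then show ?case using eq0 by simp
      next
        case (Suc n)
        define j where "j = Suc (k + n)"
        have j3: "3 \<le> j" using k unfolding j_def by simp
        have "Lr (j - 1) * Lr (Suc j) \<le> (Lr j)\<^sup>2"
          using ell_logconcave[OF dc j3 fin fin fin] j3 by simp
        then have "Lr k * Lr (Suc j) \<le> (Lr k)\<^sup>2" using Suc.IH unfolding j_def by simp
        then have "Lr (Suc j) \<le> Lr k" using Lr1[of k] k by (simp add: power2_eq_square)
        moreover have "Lr j \<le> Lr (Suc j)" using Lrmono[of j "Suc j"] j3 by simp
        ultimately have "Lr (Suc j) = Lr k" using Suc.IH unfolding j_def by simp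
        then show ?case using Suc.IH unfolding j_def by simp
      qed
      define n where "n = nat (ceiling (Lr k)) + 1"
      have "Lr k < real n" unfolding n_def by linarith
      moreover have "real (k + n) - 1 \<le> Lr (k + n)" using Lrge[of "k + n"] k by simp
      ultimately show False using P[of n] k by simp
    qed
  qed
qed

theorem corollary4:
  assumes "diagonal_conjecture"
  shows "((\<forall>k\<ge>3. L_lim k < \<infinity>) \<or> (\<forall>k\<ge>3. L_lim k = \<infinity>))
     \<and> (L_lim 3 < \<infinity> \<longrightarrow> (\<forall>k\<ge>3. L_lim k < L_lim (Suc k)))"
  using main_result[OF assms] .

end
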